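(* Let $R$ be a commutative ring with identity, $\mathfrak{m}$ a maximal ideal of $R$, and $M$ a torsion-free unitary $R$-module. Then the following are equivalent: (1) $M$ is an $\mathfrak{m}$-Noetherian module; (2) $M_{\mathfrak{m}}$ is a Noetherian $R_{\mathfrak{m}}$-module and for every nonzero finitely generated $R$-submodule $L$ of $M$ there exists $s\in R\setminus\mathfrak{m}$ such that $L_{\mathfrak{m}}\cap M=L:s$.
   Context: For a prime ideal $P$, $M$ is $P$-Noetherian if it is $S$-Noetherian for $S=R\setminus P$, where a submodule $L$ is $S$-finite if there exist $s\in S$ and a finitely generated submodule $F$ of $M$ with $Ls\subseteq F\subseteq L$, and $M$ is $S$-Noetherian if every submodule is $S$-finite. For $r\in R$ and a submodule $L$ of $M$, $L:r=\{x\in M\mid xr\in L\}$. The intersection $L_{\mathfrak{m}}\cap M$ is taken in $M_{\mathfrak{m}}$, with $M$ identified with its image there. *)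

theory Defs
  imports Main "HOL.Modules"
begin

text \<open>The ring R is the type 'a (commutative ring with identity), the R-module M is the
type 'b, with scalar action sc (unitary R-module = locale module).  Submodules of M are
sets L with module.subspace sc L.  The paper writes the action on the right (x r); here
it is written sc r x.\<close>

definition ideal_of :: "'a::comm_ring_1 set \<Rightarrow> bool" where
  "ideal_of I \<longleftrightarrow> 0 \<in> I \<and> (\<forall>x\<in>I. \<forall>y\<in>I. x + y \<in> I) \<and> (\<forall>r. \<forall>x\<in>I. r * x \<in> I)"

definition maximal_ideal :: "'a::comm_ring_1 set \<Rightarrow> bool" where
  "maximal_ideal P \<longleftrightarrow> ideal_of P \<and> P \<noteq> UNIV \<and>
     (\<forall>J. ideal_of J \<and> P \<subseteq> J \<longrightarrow> J = P \<or> J = UNIV)"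

definition torsion_free :: "('a::comm_ring_1 \<Rightarrow> 'b::ab_group_add \<Rightarrow> 'b) \<Rightarrow> bool" where
  "torsion_free sc \<longleftrightarrow> (\<forall>r x. sc r x = 0 \<longrightarrow> r = 0 \<or> x = 0)"

definition fin_gen :: "('a::comm_ring_1 \<Rightarrow> 'b::ab_group_add \<Rightarrow> 'b) \<Rightarrow> 'b set \<Rightarrow> bool" where
  "fin_gen sc F \<longleftrightarrow> (\<exists>G. finite G \<and> F = module.span sc G)"

definition S_finite :: "('a::comm_ring_1 \<Rightarrow> 'b::ab_group_add \<Rightarrow> 'b) \<Rightarrow> 'a set \<Rightarrow> 'b set \<Rightarrow> bool" where
  "S_finite sc S L \<longleftrightarrow> (\<exists>s\<in>S. \<exists>F. module.subspace sc F \<and> fin_gen sc F \<and>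
      sc s ` L \<subseteq> F \<and> F \<subseteq> L)"

definition S_Noetherian :: "('a::comm_ring_1 \<Rightarrow> 'b::ab_group_add \<Rightarrow> 'b) \<Rightarrow> 'a set \<Rightarrow> bool" where
  "S_Noetherian sc S \<longleftrightarrow> (\<forall>L. module.subspace sc L \<longrightarrow> S_finite sc S L)"

definition P_Noetherian :: "('a::comm_ring_1 \<Rightarrow> 'b::ab_group_add \<Rightarrow> 'b) \<Rightarrow> 'a set \<Rightarrow> bool" where
  "P_Noetherian sc P \<longleftrightarrow> S_Noetherian sc (UNIV - P)"

definition colon :: "('a::comm_ring_1 \<Rightarrow> 'b::ab_group_add \<Rightarrow> 'b) \<Rightarrow> 'b set \<Rightarrow> 'a \<Rightarrow> 'b set" where
  "colon sc L r = {x. sc r x \<in> L}"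

section \<open>Localization M_P at a prime ideal P, as equivalence classes of fractions\<close>

definition frac :: "('a::comm_ring_1 \<Rightarrow> 'b::ab_group_add \<Rightarrow> 'b) \<Rightarrow> 'a set \<Rightarrow> 'b \<Rightarrow> 'a \<Rightarrow> ('b \<times> 'a) set" where
  "frac sc P x s = {(y, t). t \<notin> P \<and> (\<exists>u. u \<notin> P \<and> sc (u * t) x = sc (u * s) y)}"

definition loc_carrier :: "('a::comm_ring_1 \<Rightarrow> 'b::ab_group_add \<Rightarrow> 'b) \<Rightarrow> 'a set \<Rightarrow> ('b \<times> 'a) set set" where
  "loc_carrier sc P = {frac sc P x s | x s. s \<notin> P}"

definition loc_submodule :: "('a::comm_ring_1 \<Rightarrow> 'b::ab_group_add \<Rightarrow> 'b) \<Rightarrow> 'a set \<Rightarrow> ('b \<times> 'a) set set \<Rightarrow> bool" where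
  "loc_submodule sc P N \<longleftrightarrow> N \<subseteq> loc_carrier sc P \<and> frac sc P 0 1 \<in> N \<and>
     (\<forall>x s y t. s \<notin> P \<and> t \<notin> P \<and> frac sc P x s \<in> N \<and> frac sc P y t \<in> N \<longrightarrow>
        frac sc P (sc t x + sc s y) (s * t) \<in> N) \<and>
     (\<forall>r u x s. u \<notin> P \<and> s \<notin> P \<and> frac sc P x s \<in> N \<longrightarrow> frac sc P (sc r x) (u * s) \<in> N)"

definition loc_fin_gen :: "('a::comm_ring_1 \<Rightarrow> 'b::ab_group_add \<Rightarrow> 'b) \<Rightarrow> 'a set \<Rightarrow> ('b \<times> 'a) set set \<Rightarrow> bool" where
  "loc_fin_gen sc P N \<longleftrightarrow> (\<exists>G. finite G \<and> G \<subseteq> loc_carrier sc P \<and>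
      N = \<Inter>{K. loc_submodule sc P K \<and> G \<subseteq> K})"

definition loc_Noetherian :: "('a::comm_ring_1 \<Rightarrow> 'b::ab_group_add \<Rightarrow> 'b) \<Rightarrow> 'a set \<Rightarrow> bool" where
  "loc_Noetherian sc P \<longleftrightarrow> (\<forall>N. loc_submodule sc P N \<longrightarrow> loc_fin_gen sc P N)"

text \<open>L_P = {x/s | x \<in> L, s \<notin> P} and L_P \<inter> M = {x \<in> M. x/1 \<in> L_P}.\<close>
definition loc_sub :: "('a::comm_ring_1 \<Rightarrow> 'b::ab_group_add \<Rightarrow> 'b) \<Rightarrow> 'a set \<Rightarrow> 'b set \<Rightarrow> ('b \<times> 'a) set set" where
  "loc_sub sc P L = {frac sc P x s | x s. x \<in> L \<and> s \<notin> P}"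

definition loc_contract :: "('a::comm_ring_1 \<Rightarrow> 'b::ab_group_add \<Rightarrow> 'b) \<Rightarrow> 'a set \<Rightarrow> 'b set \<Rightarrow> 'b set" where
  "loc_contract sc P L = {x. frac sc P x 1 \<in> loc_sub sc P L}"

end

theory Submission
  imports Defs
begin

locale lsetup = module sc for sc :: "'a::comm_ring_1 \<Rightarrow> 'b::ab_group_add \<Rightarrow> 'b" +
  fixes m :: "'a set"
  assumes max: "maximal_ideal m" and tf: "torsion_free sc"
begin

lemma m_ideal: "ideal_of m" using max by (simp add: maximal_ideal_def)

lemma zero_m: "0 \<in> m" using m_ideal by (simp add: ideal_of_def)

lemma one_m: "1 \<notin> m"
proof
  assume "1 \<in> m"
  then have "\<forall>r. r \<in> m" using m_ideal unfolding ideal_of_def by (metis mult.right_neutral)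
  then show False using max by (auto simp: maximal_ideal_def)
qed

lemma nz: "t \<notin> m \<Longrightarrow> t \<noteq> 0" using zero_m by auto

lemma prime_m: assumes "s \<notin> m" "t \<notin> m" shows "s * t \<notin> m"
proof
  assume st: "s * t \<in> m"
  define J where "J = {p + r * s | p r. p \<in> m}"
  have "ideal_of J" unfolding ideal_of_def J_def
  proof (intro conjI ballI allI)
    show "0 \<in> {p + r * s |p r. p \<in> m}" using zero_m by (intro CollectI exI[of _ 0]) auto
  next
    fix x y assume "x \<in> {p + r * s |p r. p \<in> m}" "y \<in> {p + r * s |p r. p \<in> m}"
    then obtain p r p' r' where "x = p + r * s" "y = p' + r' * s" "p \<in> m" "p' \<in> m" by auto
    moreover have "p + p' \<in> m" using \<open>p \<in> m\<close> \<open>p' \<in> m\<close> m_ideal unfolding ideal_of_def by blast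
    ultimately have "x + y = (p + p') + (r + r') * s \<and> p + p' \<in> m" by (simp add: algebra_simps)
    then show "x + y \<in> {p + r * s |p r. p \<in> m}" by blast
  next
    fix q x assume "x \<in> {p + r * s |p r. p \<in> m}"
    then obtain p r where "x = p + r * s" "p \<in> m" by auto
    moreover have "q * p \<in> m" using \<open>p \<in> m\<close> m_ideal unfolding ideal_of_def by blast
    ultimately have "q * x = q * p + (q * r) * s \<and> q * p \<in> m" by (simp add: algebra_simps)
    then show "q * x \<in> {p + r * s |p r. p \<in> m}" by blast
  qed
  moreover have "m \<subseteq> J" unfolding J_def by (force intro: exI[of _ 0])
  moreover have "s \<in> J" unfolding J_def by (force intro: exI[of _ 0] exI[of _ 1] zero_m)
  ultimately have "J = UNIV" using max assms unfolding maximal_ideal_def by blast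
  then obtain p r where pr: "1 = p + r * s" "p \<in> m" unfolding J_def by blast
  then have "t = t * p + r * (s * t)" by (metis mult.commute mult.left_commute mult.right_neutral distrib_left)
  moreover have "t * p \<in> m" "r * (s * t) \<in> m" using pr st m_ideal unfolding ideal_of_def by auto
  ultimately have "t \<in> m" using m_ideal unfolding ideal_of_def by metis
  then show False using assms by simp
qed

lemma cancel: assumes "u \<notin> m" "sc u x = sc u y" shows "x = y"
proof -
  have "sc u (x - y) = 0" using assms by (simp add: scale_right_diff_distrib)
  then have "x - y = 0" using tf nz[OF assms(1)] unfolding torsion_free_def by blast
  then show ?thesis by simp
qed

lemma frac_mem: "(y, t) \<in> frac sc m x s \<longleftrightarrow> t \<notin> m \<and> sc t x = sc s y"
proof
  assume "(y, t) \<in> frac sc m x s"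
  then obtain u where "t \<notin> m" "u \<notin> m" "sc (u * t) x = sc (u * s) y" unfolding frac_def by auto
  then show "t \<notin> m \<and> sc t x = sc s y" using cancel[of u "sc t x" "sc s y"] by simp
next
  assume "t \<notin> m \<and> sc t x = sc s y"
  then show "(y, t) \<in> frac sc m x s" unfolding frac_def using one_m
    by (auto intro!: exI[of _ 1])
qed

lemma frac_eq: assumes "s \<notin> m" "t \<notin> m"
  shows "frac sc m x s = frac sc m y t \<longleftrightarrow> sc t x = sc s y"
proof
  assume "frac sc m x s = frac sc m y t"
  moreover have "(x, s) \<in> frac sc m x s" using assms frac_mem by simp
  ultimately show "sc t x = sc s y" using frac_mem by auto
next
  assume eq: "sc t x = sc s y"
  show "frac sc m x s = frac sc m y t"
  proof (intro set_eqI)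
    fix p :: "'b \<times> 'a"
    obtain z w where p: "p = (z, w)" by force
    have "sc w x = sc s z \<longleftrightarrow> sc w y = sc t z"
    proof
      assume h: "sc w x = sc s z"
      have "sc s (sc w y) = sc s (sc t z)"
        using arg_cong[OF h, of "sc t"] eq by (simp add: mult.commute mult.left_commute)
          (metis scale_scale mult.commute)
      then show "sc w y = sc t z" using cancel assms by blast
    next
      assume h: "sc w y = sc t z"
      have "sc t (sc w x) = sc t (sc s z)"
        using arg_cong[OF h, of "sc s"] eq
        by (metis scale_scale mult.commute)
      then show "sc w x = sc s z" using cancel assms by blast
    qed
    then show "p \<in> frac sc m x s \<longleftrightarrow> p \<in> frac sc m y t" using p frac_mem by simp
  qed
qed

lemma loc_mem: assumes L: "subspace L" and s: "s \<notin> m"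
  shows "frac sc m x s \<in> loc_sub sc m L \<longleftrightarrow> (\<exists>u. u \<notin> m \<and> sc u x \<in> L)"
proof
  assume "frac sc m x s \<in> loc_sub sc m L"
  then obtain x' s' where h: "frac sc m x s = frac sc m x' s'" "x' \<in> L" "s' \<notin> m"
    unfolding loc_sub_def by blast
  then have e: "sc s' x = sc s x'" using frac_eq[OF s h(3)] by blast
  have "sc s x' \<in> L" using L h(2) by (rule subspace_scale)
  then have "s' \<notin> m \<and> sc s' x \<in> L" using e h(3) by simp
  then show "\<exists>u. u \<notin> m \<and> sc u x \<in> L" by blast
next
  assume "\<exists>u. u \<notin> m \<and> sc u x \<in> L"
  then obtain u where u: "u \<notin> m" "sc u x \<in> L" by blast
  have "frac sc m x s = frac sc m (sc u x) (u * s)"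
    using frac_eq[OF s prime_m[OF u(1) s]] by (simp add: mult.commute)
  then show "frac sc m x s \<in> loc_sub sc m L" unfolding loc_sub_def
    using u prime_m[OF u(1) s] by blast
qed

lemma contract_eq: assumes L: "subspace L"
  shows "loc_contract sc m L = {x. \<exists>u. u \<notin> m \<and> sc u x \<in> L}"
  unfolding loc_contract_def using loc_mem[OF L one_m] by blast

lemma contract_subspace: assumes L: "subspace L"
  shows "subspace {x. \<exists>u. u \<notin> m \<and> sc u x \<in> L}"
proof (rule subspaceI)
  show "0 \<in> {x. \<exists>u. u \<notin> m \<and> sc u x \<in> L}" using one_m L subspace_0 by auto
next
  fix x y assume "x \<in> {x. \<exists>u. u \<notin> m \<and> sc u x \<in> L}" "y \<in> {x. \<exists>u. u \<notin> m \<and> sc u x \<in> L}"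
  then obtain u v where uv: "u \<notin> m" "sc u x \<in> L" "v \<notin> m" "sc v y \<in> L" by blast
  have "sc (u * v) (x + y) = sc v (sc u x) + sc u (sc v y)"
    by (simp add: scale_right_distrib mult.commute)
  also have "\<dots> \<in> L" using uv L subspace_add subspace_scale by blast
  finally show "x + y \<in> {x. \<exists>u. u \<notin> m \<and> sc u x \<in> L}" using prime_m[OF uv(1,3)] by blast
next
  fix c x assume "x \<in> {x. \<exists>u. u \<notin> m \<and> sc u x \<in> L}"
  then obtain u where u: "u \<notin> m" "sc u x \<in> L" by blast
  have "sc u (sc c x) = sc c (sc u x)" by (simp add: mult.commute)
  also have "\<dots> \<in> L" using u L subspace_scale by blast
  finally show "sc c x \<in> {x. \<exists>u. u \<notin> m \<and> sc u x \<in> L}" using u by blast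
qed

lemma loc_sub_submodule: assumes L: "subspace L"
  shows "loc_submodule sc m (loc_sub sc m L)"
  unfolding loc_submodule_def
proof (intro conjI allI impI)
  show "loc_sub sc m L \<subseteq> loc_carrier sc m" unfolding loc_sub_def loc_carrier_def by blast
  show "frac sc m 0 1 \<in> loc_sub sc m L" unfolding loc_sub_def using one_m L subspace_0 by blast
next
  fix x s y t assume h: "s \<notin> m \<and> t \<notin> m \<and> frac sc m x s \<in> loc_sub sc m L \<and> frac sc m y t \<in> loc_sub sc m L"
  then have "x \<in> {x. \<exists>u. u \<notin> m \<and> sc u x \<in> L}" "y \<in> {x. \<exists>u. u \<notin> m \<and> sc u x \<in> L}"
    using loc_mem[OF L, of s x] loc_mem[OF L, of t y] by simp_all
  then have "sc t x + sc s y \<in> {x. \<exists>u. u \<notin> m \<and> sc u x \<in> L}"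
    by (intro subspace_add[OF contract_subspace[OF L]] subspace_scale[OF contract_subspace[OF L]])
  then show "frac sc m (sc t x + sc s y) (s * t) \<in> loc_sub sc m L"
    using loc_mem[OF L prime_m, of s t "sc t x + sc s y"] h by simp
next
  fix r u x s assume h: "u \<notin> m \<and> s \<notin> m \<and> frac sc m x s \<in> loc_sub sc m L"
  then have "x \<in> {x. \<exists>u. u \<notin> m \<and> sc u x \<in> L}" using loc_mem[OF L, of s x] by simp
  then have "sc r x \<in> {x. \<exists>u. u \<notin> m \<and> sc u x \<in> L}"
    by (rule subspace_scale[OF contract_subspace[OF L]])
  then show "frac sc m (sc r x) (u * s) \<in> loc_sub sc m L"
    using loc_mem[OF L prime_m, of u s "sc r x"] h by simp
qed

lemma sub1: assumes K: "loc_submodule sc m K"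
  shows "subspace {x. frac sc m x 1 \<in> K}"
proof (rule subspaceI)
  show "0 \<in> {x. frac sc m x 1 \<in> K}" using K unfolding loc_submodule_def by simp
next
  fix x y assume "x \<in> {x. frac sc m x 1 \<in> K}" "y \<in> {x. frac sc m x 1 \<in> K}"
  then have "frac sc m (sc 1 x + sc 1 y) (1 * 1) \<in> K" using K one_m unfolding loc_submodule_def by blast
  then show "x + y \<in> {x. frac sc m x 1 \<in> K}" by simp
next
  fix c x assume "x \<in> {x. frac sc m x 1 \<in> K}"
  then have "frac sc m (sc c x) (1 * 1) \<in> K" using K one_m unfolding loc_submodule_def by blast
  then show "sc c x \<in> {x. frac sc m x 1 \<in> K}" by simp
qed

lemma fin_clear: assumes "finite G" "G \<subseteq> {x. \<exists>u. u \<notin> m \<and> sc u x \<in> L}" "subspace L"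
  shows "\<exists>u. u \<notin> m \<and> (\<forall>g\<in>G. sc u g \<in> L)"
  using assms
proof (induction G rule: finite_induct)
  case empty
  then show ?case using one_m by blast
next
  case (insert a F)
  then obtain u where u: "u \<notin> m" "\<forall>g\<in>F. sc u g \<in> L" by blast
  obtain v where v: "v \<notin> m" "sc v a \<in> L" using insert.prems by blast
  have "\<forall>g\<in>insert a F. sc (u * v) g \<in> L"
  proof
    fix g assume "g \<in> insert a F"
    then show "sc (u * v) g \<in> L"
    proof
      assume "g = a"
      have "sc u (sc v a) \<in> L" using insert.prems(2) v(2) by (rule subspace_scale)
      then show ?thesis using \<open>g = a\<close> by simp
    next
      assume "g \<in> F"
      then have "sc u g \<in> L" using u(2) by blast
      then have "sc v (sc u g) \<in> L" by (rule subspace_scale[OF insert.prems(2)])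
      moreover have "sc (u * v) g = sc v (sc u g)" by (simp add: mult.commute)
      ultimately show ?thesis by simp
    qed
  qed
  then show ?case using prime_m[OF u(1) v(1)] by blast
qed

end

theorem proposition2p2:
  fixes sc :: "'a::comm_ring_1 \<Rightarrow> 'b::ab_group_add \<Rightarrow> 'b" and m :: "'a set"
  assumes "module sc" and "maximal_ideal m" and "torsion_free sc"
  shows "P_Noetherian sc m \<longleftrightarrow>
    (loc_Noetherian sc m \<and>
     (\<forall>L. module.subspace sc L \<and> fin_gen sc L \<and> L \<noteq> {0} \<longrightarrow>
        (\<exists>s. s \<notin> m \<and> loc_contract sc m L = colon sc L s)))"
proof -
  interpret lsetup sc m using assms by (simp add: lsetup_def lsetup_axioms_def)
  show ?thesis
  proof
    assume PN: "P_Noetherian sc m"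
    have SF: "\<exists>s G. s \<notin> m \<and> finite G \<and> sc s ` L \<subseteq> span G \<and> span G \<subseteq> L"
      if "subspace L" for L
      using PN that unfolding P_Noetherian_def S_Noetherian_def S_finite_def fin_gen_def by blast
    have A: "loc_Noetherian sc m"
      unfolding loc_Noetherian_def
    proof (intro allI impI)
      fix N assume N: "loc_submodule sc m N"
      define L where "L = {x. frac sc m x 1 \<in> N}"
      have "subspace L" using sub1[OF N] L_def by simp
      then obtain s G where s: "s \<notin> m" "finite G" "sc s ` L \<subseteq> span G" "span G \<subseteq> L"
        using SF by blast
      have GN: "(\<lambda>g. frac sc m g 1) ` G \<subseteq> N" using s(4) span_superset L_def by blast
      show "loc_fin_gen sc m N" unfolding loc_fin_gen_def
      proof (intro exI[of _ "(\<lambda>g. frac sc m g 1) ` G"] conjI)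
        show "finite ((\<lambda>g. frac sc m g 1) ` G)" using s(2) by simp
        show "(\<lambda>g. frac sc m g 1) ` G \<subseteq> loc_carrier sc m" unfolding loc_carrier_def using one_m by blast
        show "N = \<Inter>{K. loc_submodule sc m K \<and> (\<lambda>g. frac sc m g 1) ` G \<subseteq> K}"
        proof
          show "\<Inter>{K. loc_submodule sc m K \<and> (\<lambda>g. frac sc m g 1) ` G \<subseteq> K} \<subseteq> N"
            using N GN by blast
        next
          show "N \<subseteq> \<Inter>{K. loc_submodule sc m K \<and> (\<lambda>g. frac sc m g 1) ` G \<subseteq> K}"
          proof (rule subsetI, rule InterI)
            fix n K assume n: "n \<in> N" and K: "K \<in> {K. loc_submodule sc m K \<and> (\<lambda>g. frac sc m g 1) ` G \<subseteq> K}"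
            have "n \<in> loc_carrier sc m" using N n unfolding loc_submodule_def by blast
            then obtain x t where xt: "n = frac sc m x t" "t \<notin> m" unfolding loc_carrier_def by blast
            have "frac sc m (sc t x) (1 * t) \<in> N" using N n xt one_m unfolding loc_submodule_def by blast
            moreover have "frac sc m (sc t x) (1 * t) = frac sc m x 1"
              using frac_eq[of "1 * t" 1 "sc t x" x] xt(2) one_m by simp
            ultimately have "x \<in> L" unfolding L_def by simp
            then have sx: "sc s x \<in> span G" using s(3) by blast
            have KK: "loc_submodule sc m K" "(\<lambda>g. frac sc m g 1) ` G \<subseteq> K" using K by auto
            have "span G \<subseteq> {x. frac sc m x 1 \<in> K}"
              by (rule span_minimal) (use KK sub1[OF KK(1)] in auto)
            then have "frac sc m (sc s x) 1 \<in> K" using sx by blast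
            then have "frac sc m (sc 1 (sc s x)) (t * s * 1) \<in> K"
              using KK(1) one_m prime_m[OF xt(2) s(1)] unfolding loc_submodule_def by blast
            moreover have "frac sc m (sc 1 (sc s x)) (t * s * 1) = frac sc m x t"
              using frac_eq[of "t * s * 1" t "sc 1 (sc s x)" x] xt(2) prime_m[OF xt(2) s(1)]
              by (simp add: mult.commute)
            ultimately show "n \<in> K" using xt by simp
          qed
        qed
      qed
    qed
    have B: "\<exists>s. s \<notin> m \<and> loc_contract sc m L = colon sc L s" if L: "subspace L" for L
    proof -
      let ?C = "{x. \<exists>u. u \<notin> m \<and> sc u x \<in> L}"
      obtain s G where s: "s \<notin> m" "finite G" "sc s ` ?C \<subseteq> span G" "span G \<subseteq> ?C"
        using SF[OF contract_subspace[OF L]] by blast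
      have "G \<subseteq> ?C" using s(4) span_superset by blast
      then obtain u where u: "u \<notin> m" "\<forall>g\<in>G. sc u g \<in> L" using fin_clear[OF s(2) _ L] by blast
      have su: "subspace {x. sc u x \<in> L}"
      proof (rule subspaceI)
        show "0 \<in> {x. sc u x \<in> L}" using L subspace_0 by simp
        show "x + y \<in> {x. sc u x \<in> L}" if "x \<in> {x. sc u x \<in> L}" "y \<in> {x. sc u x \<in> L}" for x y
          using that L subspace_add by (simp add: scale_right_distrib)
        show "sc c x \<in> {x. sc u x \<in> L}" if "x \<in> {x. sc u x \<in> L}" for c x
        proof -
          have "sc u x \<in> L" using that by simp
          then have "sc c (sc u x) \<in> L" by (rule subspace_scale[OF L])
          then show ?thesis by (simp add: mult.commute)
        qed
      qed
      have "span G \<subseteq> {x. sc u x \<in> L}" by (rule span_minimal) (use u su in auto)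
      have "?C = colon sc L (u * s)"
      proof
        show "?C \<subseteq> colon sc L (u * s)"
        proof
          fix x assume "x \<in> ?C"
          then have "sc s x \<in> span G" using s(3) by blast
          then have "sc u (sc s x) \<in> L" using \<open>span G \<subseteq> {x. sc u x \<in> L}\<close> by blast
          then show "x \<in> colon sc L (u * s)" unfolding colon_def by simp
        qed
        show "colon sc L (u * s) \<subseteq> ?C" unfolding colon_def using prime_m[OF u(1) s(1)] by blast
      qed
      then show ?thesis using contract_eq[OF L] prime_m[OF u(1) s(1)] by auto
    qed
    show "loc_Noetherian sc m \<and>
     (\<forall>L. module.subspace sc L \<and> fin_gen sc L \<and> L \<noteq> {0} \<longrightarrow>
        (\<exists>s. s \<notin> m \<and> loc_contract sc m L = colon sc L s))" using A B by blast
  next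
    assume H: "loc_Noetherian sc m \<and>
     (\<forall>L. module.subspace sc L \<and> fin_gen sc L \<and> L \<noteq> {0} \<longrightarrow>
        (\<exists>s. s \<notin> m \<and> loc_contract sc m L = colon sc L s))"
    show "P_Noetherian sc m"
      unfolding P_Noetherian_def S_Noetherian_def
    proof (intro allI impI)
      fix N assume N: "subspace N"
      have NS: "loc_submodule sc m (loc_sub sc m N)" by (rule loc_sub_submodule[OF N])
      have "loc_fin_gen sc m (loc_sub sc m N)" using H NS unfolding loc_Noetherian_def by blast
      then obtain G where G: "finite G" "G \<subseteq> loc_carrier sc m"
        "loc_sub sc m N = \<Inter>{K. loc_submodule sc m K \<and> G \<subseteq> K}"
        unfolding loc_fin_gen_def by blast
      have GN: "G \<subseteq> loc_sub sc m N" using G(3) by blast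
      have "\<forall>g\<in>G. \<exists>p. g = frac sc m (fst p) (snd p) \<and> fst p \<in> N \<and> snd p \<notin> m"
      proof
        fix g assume "g \<in> G"
        then obtain x s where "g = frac sc m x s" "x \<in> N" "s \<notin> m" using GN unfolding loc_sub_def by blast
        then show "\<exists>p. g = frac sc m (fst p) (snd p) \<and> fst p \<in> N \<and> snd p \<notin> m"
          by (intro exI[of _ "(x, s)"]) simp
      qed
      from bchoice[OF this] obtain f where
        f: "\<forall>g\<in>G. g = frac sc m (fst (f g)) (snd (f g)) \<and> fst (f g) \<in> N \<and> snd (f g) \<notin> m"
        by blast
      define X where "X = (\<lambda>g. fst (f g)) ` G"
      define L where "L = span X"
      have XN: "X \<subseteq> N" using f X_def by blast
      have LN: "L \<subseteq> N" unfolding L_def by (rule span_minimal[OF XN N])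
      have Ls: "subspace L" unfolding L_def by simp
      have "G \<subseteq> loc_sub sc m L"
      proof
        fix g assume g: "g \<in> G"
        have "fst (f g) \<in> X" using g unfolding X_def by (rule imageI)
        then have fL: "fst (f g) \<in> L" unfolding L_def by (rule span_base)
        have fg: "g = frac sc m (fst (f g)) (snd (f g))" "snd (f g) \<notin> m" using f g by auto
        show "g \<in> loc_sub sc m L" unfolding loc_sub_def
          by (rule CollectI, rule exI[of _ "fst (f g)"], rule exI[of _ "snd (f g)"]) (use fg fL in simp)
      qed
      then have "loc_sub sc m L \<in> {K. loc_submodule sc m K \<and> G \<subseteq> K}"
        using loc_sub_submodule[OF Ls] by simp
      then have sub: "loc_sub sc m N \<subseteq> loc_sub sc m L"
        unfolding G(3) by (rule Inter_lower)
      have key: "\<exists>u. u \<notin> m \<and> sc u x \<in> L" if x: "x \<in> N" for x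
      proof -
        have "frac sc m x 1 \<in> loc_sub sc m N" unfolding loc_sub_def using x one_m by blast
        then have "frac sc m x 1 \<in> loc_sub sc m L" using sub by blast
        then show ?thesis using loc_mem[OF Ls one_m, of x] by simp
      qed
      show "S_finite sc (UNIV - m) N"
        unfolding S_finite_def fin_gen_def
      proof (cases "L = {0}")
        case True
        have "N \<subseteq> {0}"
        proof
          fix x assume "x \<in> N"
          then obtain u where "u \<notin> m" "sc u x \<in> L" using key by blast
          then show "x \<in> {0}" using True tf nz unfolding torsion_free_def by blast
        qed
        then have "1 \<in> UNIV - m \<and> subspace (span {}) \<and> (finite {} \<and> span {} = span {}) \<and> sc 1 ` N \<subseteq> span {} \<and> span {} \<subseteq> N"
          using N subspace_0 one_m by auto
        then show "\<exists>s\<in>UNIV - m. \<exists>F. subspace F \<and> (\<exists>G. finite G \<and> F = span G) \<and> sc s ` N \<subseteq> F \<and> F \<subseteq> N"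
          by blast
      next
        case False
        have "fin_gen sc L" unfolding fin_gen_def L_def X_def using G(1) by blast
        then have "\<exists>s. s \<notin> m \<and> loc_contract sc m L = colon sc L s"
          using H Ls False by simp
        then obtain s where s: "s \<notin> m" "loc_contract sc m L = colon sc L s" by blast
        have "sc s ` N \<subseteq> L"
        proof
          fix y assume "y \<in> sc s ` N"
          then obtain x where "x \<in> N" "y = sc s x" by blast
          then have "x \<in> loc_contract sc m L" using key contract_eq[OF Ls] by blast
          then show "y \<in> L" using s(2) \<open>y = sc s x\<close> unfolding colon_def by blast
        qed
        moreover have "finite X" using G(1) X_def by simp
        ultimately have "s \<in> UNIV - m \<and> subspace L \<and> (finite X \<and> L = span X) \<and> sc s ` N \<subseteq> L \<and> L \<subseteq> N"
          using s(1) Ls LN L_def by simp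
        then show "\<exists>s\<in>UNIV - m. \<exists>F. subspace F \<and> (\<exists>G. finite G \<and> F = span G) \<and> sc s ` N \<subseteq> F \<and> F \<subseteq> N"
          by blast
      qed
    qed
  qed
qed

end
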